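(* Let $\lambda_1,\lambda_2>0$ and consider the linear saddle $\dot x=\lambda_1x$, $\dot y=-\lambda_2y$ in the bidisc $\{|x|,|y|\le1\}\subset\mathbb{C}^2$, with first integral $H=x^{1/\lambda_1}y^{1/\lambda_2}$. Fix $0<h<1$ and let $U_s=\{|H|<h\}\cap\{|x|,|y|\le1\}$. Then there exists a pair $v=(v_1,v_I)$ of smooth real vector fields on $U_s$ satisfying $d(\log H)(v_1)=1$ and $d(\log H)(v_I)=i$, such that: (1) both the negative-time flow of $v_1$ and the flow of $v_I$ do not increase $|x|$ and $|y|$; (2) both $v_1$ and $v_I$ are tangent to the lines $\{y=\mathrm{const}\}$ near $(0,1)$ and to the lines $\{x=\mathrm{const}\}$ near $(1,0)$.
   Context: $d(\log H)$ denotes the differential of any local branch of $\log H$ (which is single-valued as a one-form). A real vector field on $\mathbb{C}^2$ is a vector field on the underlying $\mathbb{R}^4$. *)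

theory Defs
  imports "HOL-Analysis.Analysis"
begin

text \<open>A real vector field on C^2
  (= R^4) is a map complex \<times> complex \<Rightarrow> complex \<times> complex, the value being a real
  tangent vector (a,b) \<in> C^2 = R^4.\<close>

text \<open>In finite dimensions this is exactly smoothness (all iterated derivatives exist and are
  continuous).\<close>
coinductive smooth_on :: "'a::real_normed_vector set \<Rightarrow> ('a \<Rightarrow> 'b::real_normed_vector) \<Rightarrow> bool"
  where
  smooth_onI: "(\<And>p. p \<in> S \<Longrightarrow> (f has_derivative D p) (at p within S)) \<Longrightarrow>
     (\<And>u. smooth_on S (\<lambda>p. D p u)) \<Longrightarrow> smooth_on S f"

definition absH :: "real \<Rightarrow> real \<Rightarrow> complex \<times> complex \<Rightarrow> real" where
  "absH l1 l2 p = norm (fst p) powr (1 / l1) * norm (snd p) powr (1 / l2)"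

definition Us :: "real \<Rightarrow> real \<Rightarrow> real \<Rightarrow> (complex \<times> complex) set" where
  "Us l1 l2 h = {p. absH l1 l2 p < h \<and> norm (fst p) \<le> 1 \<and> norm (snd p) \<le> 1}"

text \<open>The one-form d(log H) = dx/(l1 x) + dy/(l2 y) (differential of any local branch of
  log H = (log x)/l1 + (log y)/l2, defined where x y \<noteq> 0), applied at the point p
  to the real tangent vector w = (a,b).\<close>
definition dlogH :: "real \<Rightarrow> real \<Rightarrow> complex \<times> complex \<Rightarrow> complex \<times> complex \<Rightarrow> complex" where
  "dlogH l1 l2 p w = fst w / (of_real l1 * fst p) + snd w / (of_real l2 * snd p)"

definition flow_nonincreasing ::
  "(complex \<times> complex) set \<Rightarrow> (complex \<times> complex \<Rightarrow> complex \<times> complex) \<Rightarrow> (complex \<times> complex \<Rightarrow> real) \<Rightarrow> bool"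
  where
  "flow_nonincreasing S w g \<longleftrightarrow>
     (\<forall>(\<gamma>::real \<Rightarrow> complex \<times> complex) a b. a \<le> b \<longrightarrow> \<gamma> ` {a..b} \<subseteq> S \<longrightarrow>
        (\<forall>t\<in>{a..b}. (\<gamma> has_vector_derivative w (\<gamma> t)) (at t within {a..b})) \<longrightarrow>
        (\<forall>t1\<in>{a..b}. \<forall>t2\<in>{a..b}. t1 \<le> t2 \<longrightarrow> g (\<gamma> t2) \<le> g (\<gamma> t1)))"

end

theory Submission imports Defs "HOL-Computational_Algebra.Polynomial" begin

definition gP :: "real poly \<Rightarrow> real \<Rightarrow> real" where
  "gP P t = (if t > 0 then poly P (1/t) * exp (-1/t) else 0)"

definition dP :: "real poly \<Rightarrow> real poly" where
  "dP P = [:0,0,1:] * (P - pderiv P)"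

lemma poly_exp_lim: "((\<lambda>s::real. poly (R::real poly) s * exp (-s)) \<longlongrightarrow> 0) at_top"
proof -
  have "((\<lambda>s. \<Sum>i\<le>degree R. coeff R i * (s ^ i / exp s)) \<longlongrightarrow> 0) at_top"
    by (intro tendsto_null_sum tendsto_mult_right_zero tendsto_power_div_exp_0)
  moreover have "(\<Sum>i\<le>degree R. coeff R i * (s ^ i / exp s)) = poly R s * exp (-s)" for s
  proof -
    have "(\<Sum>i\<le>degree R. coeff R i * (s ^ i / exp s)) = (\<Sum>i\<le>degree R. coeff R i * s ^ i) / exp s"
      by (simp add: sum_divide_distrib)
    also have "\<dots> = poly R s * exp (-s)" by (simp add: poly_altdef exp_minus divide_inverse)
    finally show ?thesis .
  qed
  ultimately show ?thesis by simp
qed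

lemma poly_exp_lim0: "((\<lambda>h::real. poly (R::real poly) (1/h) * exp (-1/h)) \<longlongrightarrow> 0) (at_right 0)"
proof -
  have "((\<lambda>h. poly R (inverse h) * exp (- inverse h)) \<longlongrightarrow> 0) (at_right 0)"
    using filterlim_compose[OF poly_exp_lim filterlim_inverse_at_top_right] by (simp add: o_def)
  then show ?thesis by (simp add: divide_inverse)
qed

lemma gP_deriv: "(gP P has_real_derivative gP (dP P) t) (at t)"
proof (cases "t > 0")
  case True
  have "((\<lambda>t. poly P (1/t) * exp (-1/t)) has_real_derivative
          poly P (1/t) * (exp (-1/t) * (1/t^2)) + poly (pderiv P) (1/t) * (- 1/t^2) * exp (-1/t)) (at t)"
    using True by (auto intro!: derivative_eq_intros simp: power2_eq_square)
  moreover have "poly P (1/t) * (exp (-1/t) * (1/t^2)) + poly (pderiv P) (1/t) * (- 1/t^2) * exp (-1/t)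
     = gP (dP P) t"
    using True by (simp add: gP_def dP_def algebra_simps power2_eq_square)
  ultimately have d: "((\<lambda>t. poly P (1/t) * exp (-1/t)) has_real_derivative gP (dP P) t) (at t)" by simp
  show ?thesis
    by (rule has_field_derivative_transform_within_open[OF d, of "{0<..}"]) (use True in \<open>auto simp: gP_def\<close>)
next
  case False
  show ?thesis
  proof (cases "t < 0")
    case True
    have d: "((\<lambda>t. 0) has_real_derivative 0) (at t)" by simp
    have "(gP P has_real_derivative 0) (at t)"
      by (rule has_field_derivative_transform_within_open[OF d, of "{..<0}"]) (use True in \<open>auto simp: gP_def\<close>)
    then show ?thesis using True by (simp add: gP_def)
  next
    case False
    with \<open>\<not> t > 0\<close> have t0: "t = 0" by simp
    have "((\<lambda>h. (gP P (0 + h) - gP P 0) / h) \<longlongrightarrow> 0) (at 0)"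
      unfolding filterlim_at_split
    proof
      show "((\<lambda>h. (gP P (0 + h) - gP P 0) / h) \<longlongrightarrow> 0) (at_left 0)"
      proof (rule tendsto_eventually)
        show "\<forall>\<^sub>F h in at_left 0. (gP P (0 + h) - gP P 0) / h = 0"
          unfolding eventually_at_left_field by (auto simp: gP_def intro!: exI[of _ "-1"])
      qed
    next
      have "\<forall>\<^sub>F h in at_right 0. poly ([:0,1:] * P) (1/h) * exp (-1/h) = (gP P (0 + h) - gP P 0) / h"
        unfolding eventually_at_right_field by (auto simp: gP_def intro!: exI[of _ 1])
      then show "((\<lambda>h. (gP P (0 + h) - gP P 0) / h) \<longlongrightarrow> 0) (at_right 0)"
        by (rule Lim_transform_eventually[OF poly_exp_lim0])
    qed
    then show ?thesis using t0 by (simp add: has_field_derivative_iff gP_def)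
  qed
qed


inductive_set SP :: "('a::real_normed_vector \<Rightarrow> real) set" where
  SPconst: "(\<lambda>p. c) \<in> SP"
| SPlin: "bounded_linear L \<Longrightarrow> L \<in> SP"
| SPadd: "f \<in> SP \<Longrightarrow> g \<in> SP \<Longrightarrow> (\<lambda>p. f p + g p) \<in> SP"
| SPmult: "f \<in> SP \<Longrightarrow> g \<in> SP \<Longrightarrow> (\<lambda>p. f p * g p) \<in> SP"
| SPinv: "f \<in> SP \<Longrightarrow> (\<forall>p. f p \<noteq> 0) \<Longrightarrow> (\<lambda>p. inverse (f p)) \<in> SP"
| SPflat: "f \<in> SP \<Longrightarrow> (\<lambda>p. gP P (f p)) \<in> SP"

lemma SP_deriv:
  assumes "f \<in> SP"
  shows "\<exists>D. (\<forall>p. (f has_derivative D p) (at p)) \<and> (\<forall>u. (\<lambda>p. D p u) \<in> SP)"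
  using assms
proof induction
  case (SPconst c)
  show ?case by (rule exI[of _ "\<lambda>p u. 0"]) (auto intro: SP.SPconst)
next
  case (SPlin L)
  show ?case by (rule exI[of _ "\<lambda>p. L"]) (auto intro: SP.SPconst bounded_linear.has_derivative[OF SPlin, OF has_derivative_ident])
next
  case (SPadd f g)
  then obtain Df Dg where f: "\<forall>p. (f has_derivative Df p) (at p)" "\<forall>u. (\<lambda>p. Df p u) \<in> SP"
    and g: "\<forall>p. (g has_derivative Dg p) (at p)" "\<forall>u. (\<lambda>p. Dg p u) \<in> SP" by blast
  show ?case
    by (rule exI[of _ "\<lambda>p u. Df p u + Dg p u"]) (use f g in \<open>auto intro: SP.SPadd has_derivative_add\<close>)
next
  case (SPmult f g)
  then obtain Df Dg where f: "\<forall>p. (f has_derivative Df p) (at p)" "\<forall>u. (\<lambda>p. Df p u) \<in> SP"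
    and g: "\<forall>p. (g has_derivative Dg p) (at p)" "\<forall>u. (\<lambda>p. Dg p u) \<in> SP" by blast
  show ?case
    by (rule exI[of _ "\<lambda>p u. f p * Dg p u + Df p u * g p"])
       (use f g SPmult.hyps in \<open>auto intro!: SP.SPadd SP.SPmult has_derivative_mult\<close>)
next
  case (SPinv f)
  then obtain Df where f: "\<forall>p. (f has_derivative Df p) (at p)" "\<forall>u. (\<lambda>p. Df p u) \<in> SP" by blast
  have "(\<lambda>p. (-1) * (inverse (f p) * Df p u * inverse (f p))) \<in> SP" for u
    using f SPinv by (intro SP.SPmult SP.SPconst SP.SPinv) auto
  then show ?case
    by (intro exI[of _ "\<lambda>p u. - (inverse (f p) * Df p u * inverse (f p))"])
       (use f SPinv in \<open>auto intro!: has_derivative_inverse\<close>)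
next
  case (SPflat f P)
  then obtain Df where f: "\<forall>p. (f has_derivative Df p) (at p)" "\<forall>u. (\<lambda>p. Df p u) \<in> SP" by blast
  have "((\<lambda>p. gP P (f p)) has_derivative (\<lambda>u. gP (dP P) (f p) * Df p u)) (at p)" for p
    using has_derivative_compose[OF f(1)[rule_format] gP_deriv[unfolded has_field_derivative_def]] .
  show ?case
    by (intro exI[of _ "\<lambda>p u. gP (dP P) (f p) * Df p u"])
       (use f SPflat \<open>\<And>p. ((\<lambda>p. gP P (f p)) has_derivative _) (at p)\<close> in \<open>auto intro!: SP.SPmult SP.SPflat\<close>)
qed


inductive_set VV :: "('a::real_normed_vector \<Rightarrow> 'b::real_normed_vector) set" where
  VVaff: "f \<in> SP \<Longrightarrow> bounded_linear L \<Longrightarrow> (\<lambda>p. f p *\<^sub>R (L p + c)) \<in> VV"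
| VVadd: "f \<in> VV \<Longrightarrow> g \<in> VV \<Longrightarrow> (\<lambda>p. f p + g p) \<in> VV"

lemma VV_deriv:
  assumes "f \<in> VV"
  shows "\<exists>D. (\<forall>p. (f has_derivative D p) (at p)) \<and> (\<forall>u. (\<lambda>p. D p u) \<in> VV)"
  using assms
proof induction
  case (VVaff f L c)
  then obtain Df where f: "\<forall>p. (f has_derivative Df p) (at p)" "\<forall>u. (\<lambda>p. Df p u) \<in> SP"
    using SP_deriv by blast
  have L: "((\<lambda>p. L p + c) has_derivative L) (at p)" for p
    using VVaff(2) by (auto intro!: derivative_eq_intros bounded_linear.has_derivative[OF VVaff(2)])
  have "(\<lambda>p. f p *\<^sub>R ((\<lambda>x. 0) p + L u) + Df p u *\<^sub>R (L p + c)) \<in> VV" for u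
    using f VVaff by (intro VV.VVadd VV.VVaff) (auto intro: bounded_linear_zero)
  then show ?case
    by (intro exI[of _ "\<lambda>p u. f p *\<^sub>R L u + Df p u *\<^sub>R (L p + c)"])
       (use f L in \<open>auto intro!: has_derivative_scaleR\<close>)
next
  case (VVadd f g)
  then obtain Df Dg where f: "\<forall>p. (f has_derivative Df p) (at p)" "\<forall>u. (\<lambda>p. Df p u) \<in> VV"
    and g: "\<forall>p. (g has_derivative Dg p) (at p)" "\<forall>u. (\<lambda>p. Dg p u) \<in> VV" by blast
  show ?case
    by (rule exI[of _ "\<lambda>p u. Df p u + Dg p u"]) (use f g in \<open>auto intro: VV.VVadd has_derivative_add\<close>)
qed

lemma VV_smooth:
  assumes "f \<in> VV"
  shows "smooth_on S f"
  using assms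
proof (coinduction arbitrary: f)
  case (smooth_on f)
  then obtain D where "\<forall>p. (f has_derivative D p) (at p)" "\<forall>u. (\<lambda>p. D p u) \<in> VV"
    using VV_deriv by blast
  then show ?case by (auto intro: has_derivative_at_withinI)
qed

lemma flow_lemma:
  fixes \<pi> :: "complex \<times> complex \<Rightarrow> complex"
  assumes lin: "bounded_linear \<pi>" and neg: "\<forall>p\<in>S. \<pi> p \<bullet> \<pi> (w p) \<le> 0"
  shows "flow_nonincreasing S w (\<lambda>p. norm (\<pi> p))"
  unfolding flow_nonincreasing_def
proof (intro allI impI ballI)
  fix \<gamma> :: "real \<Rightarrow> complex \<times> complex" and a b t1 t2 :: real
  assume ab: "a \<le> b" and sub: "\<gamma> ` {a..b} \<subseteq> S"
    and der: "\<forall>t\<in>{a..b}. (\<gamma> has_vector_derivative w (\<gamma> t)) (at t within {a..b})"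
    and t1: "t1 \<in> {a..b}" and t2: "t2 \<in> {a..b}" and t12: "t1 \<le> t2"
  define \<phi> where "\<phi> t = - (\<pi> (\<gamma> t) \<bullet> \<pi> (\<gamma> t))" for t
  have d: "(\<phi> has_real_derivative - (2 * (\<pi> (\<gamma> t) \<bullet> \<pi> (w (\<gamma> t))))) (at t within {a..b})"
    if "t \<in> {a..b}" for t
  proof -
    have g: "(\<gamma> has_derivative (\<lambda>h. h *\<^sub>R w (\<gamma> t))) (at t within {a..b})"
      using der that by (simp add: has_vector_derivative_def)
    have pg: "((\<lambda>t. \<pi> (\<gamma> t)) has_derivative (\<lambda>h. h *\<^sub>R \<pi> (w (\<gamma> t)))) (at t within {a..b})"
      using bounded_linear.has_derivative[OF lin g] by (simp add: linear_simps[OF lin])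
    have "(\<phi> has_derivative (\<lambda>h. - (\<pi> (\<gamma> t) \<bullet> (h *\<^sub>R \<pi> (w (\<gamma> t))) + (h *\<^sub>R \<pi> (w (\<gamma> t))) \<bullet> \<pi> (\<gamma> t))))
       (at t within {a..b})"
      unfolding \<phi>_def by (intro has_derivative_minus has_derivative_inner pg)
    moreover have "(\<lambda>h. - (\<pi> (\<gamma> t) \<bullet> (h *\<^sub>R \<pi> (w (\<gamma> t))) + (h *\<^sub>R \<pi> (w (\<gamma> t))) \<bullet> \<pi> (\<gamma> t)))
        = (*) (- (2 * (\<pi> (\<gamma> t) \<bullet> \<pi> (w (\<gamma> t)))))"
      by (auto simp: inner_commute algebra_simps)
    ultimately show ?thesis by (simp add: has_field_derivative_def)
  qed
  have "\<phi> t1 \<le> \<phi> t2"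
  proof (rule DERIV_nonneg_imp_increasing_open[OF t12])
    fix x assume x: "t1 < x" "x < t2"
    then have xi: "x \<in> interior {a..b}" using t1 t2 by auto
    have "x \<in> {a..b}" using x t1 t2 by auto
    then have "(\<phi> has_real_derivative - (2 * (\<pi> (\<gamma> x) \<bullet> \<pi> (w (\<gamma> x))))) (at x)"
      using d at_within_interior[OF xi] by metis
    moreover have "\<gamma> x \<in> S" using sub \<open>x \<in> {a..b}\<close> by auto
    ultimately show "\<exists>y. (\<phi> has_real_derivative y) (at x) \<and> 0 \<le> y" using neg by force
  next
    have "continuous_on {a..b} \<phi>"
      using d by (intro has_derivative_continuous_on) (auto simp: has_field_derivative_def)
    then show "continuous_on {t1..t2} \<phi>"
      by (rule continuous_on_subset) (use t1 t2 in auto)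
  qed
  then show "norm (\<pi> (\<gamma> t2)) \<le> norm (\<pi> (\<gamma> t1))"
    by (simp add: \<phi>_def norm_le)
qed


definition sfun :: "complex \<times> complex \<Rightarrow> real" where
  "sfun p = (norm (snd p))^2 - (norm (fst p))^2"

definition alpha :: "complex \<times> complex \<Rightarrow> real" where
  "alpha p = gP 1 (sfun p + 1/2) * inverse (gP 1 (sfun p + 1/2) + gP 1 (1/2 - sfun p))"

lemma gP1_pos: "t > 0 \<Longrightarrow> gP 1 t > 0" and gP1_zero: "t \<le> 0 \<Longrightarrow> gP 1 t = 0"
  and gP1_nonneg: "gP 1 t \<ge> 0"
  by (auto simp: gP_def)

lemma denom_pos: "gP 1 (sfun p + 1/2) + gP 1 (1/2 - sfun p) > 0"
proof (cases "sfun p + 1/2 > 0")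
  case True then show ?thesis using gP1_pos gP1_nonneg by (smt (verit))
next
  case False then have "1/2 - sfun p > 0" by simp
  then show ?thesis using gP1_pos gP1_nonneg by (smt (verit))
qed

lemma alpha_range: "0 \<le> alpha p" "alpha p \<le> 1"
  using denom_pos[of p] gP1_nonneg[of "sfun p + 1/2"] gP1_nonneg[of "1/2 - sfun p"]
  by (auto simp: alpha_def field_simps)

lemma sfun_SP: "sfun \<in> SP"
proof -
  have bl: "bounded_linear (\<lambda>p::complex\<times>complex. Re (snd p))" "bounded_linear (\<lambda>p::complex\<times>complex. Im (snd p))"
     "bounded_linear (\<lambda>p::complex\<times>complex. Re (fst p))" "bounded_linear (\<lambda>p::complex\<times>complex. Im (fst p))"
    by (auto intro!: bounded_linear_compose[OF bounded_linear_Re] bounded_linear_compose[OF bounded_linear_Im]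
         bounded_linear_fst bounded_linear_snd)
  have "(\<lambda>p::complex\<times>complex. Re (snd p) * Re (snd p) + Im (snd p) * Im (snd p)
     + ((-1) * (Re (fst p) * Re (fst p)) + (-1) * (Im (fst p) * Im (fst p)))) \<in> SP"
    by (intro SP.SPadd SP.SPmult SP.SPconst bl SP.SPlin)
  moreover have "(\<lambda>p::complex\<times>complex. Re (snd p) * Re (snd p) + Im (snd p) * Im (snd p)
     + ((-1) * (Re (fst p) * Re (fst p)) + (-1) * (Im (fst p) * Im (fst p)))) = sfun"
    unfolding sfun_def fun_eq_iff cmod_power2 by (simp add: power2_eq_square)
  ultimately show ?thesis by simp
qed

lemma alpha_SP: "alpha \<in> SP"
proof -
  have "(\<lambda>p. gP 1 (sfun p + 1/2) * inverse (gP 1 (sfun p + 1/2) + gP 1 ((-1) * sfun p + 1/2))) \<in> SP"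
  proof (intro SP.SPmult SP.SPinv SP.SPadd SP.SPflat sfun_SP SP.SPconst allI)
    show "gP 1 (sfun p + 1/2) + gP 1 ((-1) * sfun p + 1/2) \<noteq> 0" for p
      using denom_pos[of p] by (simp add: algebra_simps)
  qed
  then show ?thesis by (simp add: alpha_def[abs_def])
qed


lemma alpha_1: "sfun p > 1/2 \<Longrightarrow> alpha p = 1"
  using gP1_pos[of "sfun p + 1/2"] gP1_zero[of "1/2 - sfun p"] by (simp add: alpha_def)

lemma alpha_0: "sfun p < -1/2 \<Longrightarrow> alpha p = 0"
  using gP1_zero[of "sfun p + 1/2"] by (simp add: alpha_def)

lemma open_sfun: "open {p. sfun p > c}" "open {p. sfun p < c}"
proof -
  have "continuous_on UNIV sfun" unfolding sfun_def[abs_def] by (intro continuous_intros)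
  then show "open {p. sfun p > c}" "open {p. sfun p < c}"
    by (auto intro: open_Collect_less continuous_on_const)
qed

theorem lemma3:
  fixes l1 l2 h :: real
  assumes "l1 > 0" and "l2 > 0" and "0 < h" and "h < 1"
  shows "\<exists>v1 vI :: complex \<times> complex \<Rightarrow> complex \<times> complex.
     smooth_on (Us l1 l2 h) v1 \<and> smooth_on (Us l1 l2 h) vI \<and>
     (\<forall>p\<in>Us l1 l2 h. fst p \<noteq> 0 \<and> snd p \<noteq> 0 \<longrightarrow>
        dlogH l1 l2 p (v1 p) = 1 \<and> dlogH l1 l2 p (vI p) = \<i>) \<and>
     flow_nonincreasing (Us l1 l2 h) (\<lambda>p. - v1 p) (\<lambda>p. norm (fst p)) \<and>
     flow_nonincreasing (Us l1 l2 h) (\<lambda>p. - v1 p) (\<lambda>p. norm (snd p)) \<and>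
     flow_nonincreasing (Us l1 l2 h) vI (\<lambda>p. norm (fst p)) \<and>
     flow_nonincreasing (Us l1 l2 h) vI (\<lambda>p. norm (snd p)) \<and>
     (\<exists>N. open N \<and> (0, 1) \<in> N \<and>
        (\<forall>p\<in>N \<inter> Us l1 l2 h. snd (v1 p) = 0 \<and> snd (vI p) = 0)) \<and>
     (\<exists>N. open N \<and> (1, 0) \<in> N \<and>
        (\<forall>p\<in>N \<inter> Us l1 l2 h. fst (v1 p) = 0 \<and> fst (vI p) = 0))"
proof -
  define a1 where "a1 p = l1 * alpha p" for p
  define a2 where "a2 p = l2 + (-l2) * alpha p" for p
  have a1SP: "a1 \<in> SP" unfolding a1_def[abs_def] by (intro SP.SPmult SP.SPconst alpha_SP)
  have a2SP: "a2 \<in> SP" unfolding a2_def[abs_def] by (intro SP.SPadd SP.SPmult SP.SPconst alpha_SP)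
  have a1n: "a1 p \<ge> 0" for p using alpha_range[of p] assms by (simp add: a1_def)
  have a2n: "a2 p \<ge> 0" for p using alpha_range[of p] assms by (simp add: a2_def algebra_simps)
  define v1 where "v1 p = a1 p *\<^sub>R ((fst p, 0::complex) + 0) + a2 p *\<^sub>R ((0::complex, snd p) + 0)" for p
  define vI where "vI p = a1 p *\<^sub>R ((\<i> * fst p, 0::complex) + 0) + a2 p *\<^sub>R ((0::complex, \<i> * snd p) + 0)" for p
  have bl: "bounded_linear (\<lambda>p::complex\<times>complex. (fst p, 0::complex))"
    "bounded_linear (\<lambda>p::complex\<times>complex. (0::complex, snd p))"
    "bounded_linear (\<lambda>p::complex\<times>complex. (\<i> * fst p, 0::complex))"
    "bounded_linear (\<lambda>p::complex\<times>complex. (0::complex, \<i> * snd p))"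
    by (auto intro!: bounded_linear_Pair bounded_linear_fst bounded_linear_snd bounded_linear_zero
         bounded_linear_mult_right bounded_linear_compose[OF bounded_linear_mult_right])
  have "v1 \<in> VV" unfolding v1_def[abs_def] by (intro VV.VVadd VV.VVaff a1SP a2SP bl)
  then have s1: "smooth_on (Us l1 l2 h) v1" by (rule VV_smooth)
  have "vI \<in> VV" unfolding vI_def[abs_def] by (intro VV.VVadd VV.VVaff a1SP a2SP bl)
  then have sI: "smooth_on (Us l1 l2 h) vI" by (rule VV_smooth)
  have v1c: "fst (v1 p) = a1 p *\<^sub>R fst p" "snd (v1 p) = a2 p *\<^sub>R snd p" for p
    by (simp_all add: v1_def)
  have vIc: "fst (vI p) = a1 p *\<^sub>R (\<i> * fst p)" "snd (vI p) = a2 p *\<^sub>R (\<i> * snd p)" for p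
    by (simp_all add: vI_def)
  have dl: "dlogH l1 l2 p (v1 p) = 1 \<and> dlogH l1 l2 p (vI p) = \<i>" if "fst p \<noteq> 0" "snd p \<noteq> 0" for p
    using that assms
    by (simp add: dlogH_def v1c vIc a1_def a2_def scaleR_conv_of_real field_simps)
  have ii: "x \<bullet> (\<i> * x) = 0" for x :: complex by (simp add: inner_complex_def)
  have f1: "flow_nonincreasing (Us l1 l2 h) (\<lambda>p. - v1 p) (\<lambda>p. norm (fst p))"
    by (rule flow_lemma[OF bounded_linear_fst]) (use a1n in \<open>simp add: v1c\<close>)
  have f2: "flow_nonincreasing (Us l1 l2 h) (\<lambda>p. - v1 p) (\<lambda>p. norm (snd p))"
    by (rule flow_lemma[OF bounded_linear_snd]) (use a2n in \<open>simp add: v1c\<close>)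
  have f3: "flow_nonincreasing (Us l1 l2 h) vI (\<lambda>p. norm (fst p))"
    by (rule flow_lemma[OF bounded_linear_fst]) (simp add: vIc ii)
  have f4: "flow_nonincreasing (Us l1 l2 h) vI (\<lambda>p. norm (snd p))"
    by (rule flow_lemma[OF bounded_linear_snd]) (simp add: vIc ii)
  have N1: "open {p. sfun p > 1/2} \<and> (0, 1) \<in> {p. sfun p > 1/2} \<and>
        (\<forall>p\<in>{p. sfun p > 1/2} \<inter> Us l1 l2 h. snd (v1 p) = 0 \<and> snd (vI p) = 0)"
    using open_sfun(1)[of "1/2"] by (auto simp: v1c vIc a2_def alpha_1) (simp add: sfun_def)
  have N2: "open {p. sfun p < -1/2} \<and> (1, 0) \<in> {p. sfun p < -1/2} \<and>
        (\<forall>p\<in>{p. sfun p < -1/2} \<inter> Us l1 l2 h. fst (v1 p) = 0 \<and> fst (vI p) = 0)"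
    using open_sfun(2)[of "-1/2"] by (auto simp: v1c vIc a1_def alpha_0) (simp add: sfun_def)
  show ?thesis
    apply (rule exI[of _ v1], rule exI[of _ vI])
    using s1 sI dl f1 f2 f3 f4 N1 N2 by blast
qed

end
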